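(* Let $w\in\mathbb{R}^J_+\setminus\{0\}$. Then $$\mathscr{P}_1(w)=\sup_{\mu\in\mathbb{M}_1^J,\ \lambda\in\mathbb{L}^M}\Big\{\sum_{i\in\Omega}f_i(\mu_i,\lambda_i,w)-\beta(\mu,w)\ \Big|\ \mathbb{E}[\lambda]=0\Big\},$$ where for $i\in\Omega$, $\mu_i\in\mathbb{R}^J_+$, $\lambda_i\in\mathbb{R}^M$, $$f_i(\mu_i,\lambda_i,w)=\inf_{(x_i,y_i)\in\mathcal{F}_i}\Big(w^{\mathsf T}\big[\mu_i\cdot(Cx_i+Q_iy_i)\big]+p_i\lambda_i^{\mathsf T}x_i\Big).$$
   Context: Probability space: $\Omega=\{1,\dots,I\}$, $I\ge 2$, with probabilities $p_i>0$, $\sum_{i\in\Omega}p_i=1$. For an integer $J\ge1$, $\mathbb{L}^J$ denotes the set of random vectors $u:\Omega\to\mathbb{R}^J$, identified with tuples $(u_1,\dots,u_I)$, $u_i\in\mathbb{R}^J$; $\mathbb{L}^{J\times N}$ denotes random $J\times N$ matrices with realizations $Q_1,\dots,Q_I$; $\mathbb{L}^N_+$ the random vectors with nonnegative components; $\mathbb{E}[u]=\sum_{i}p_iu_i$. $u\le v$ means $u_i^j\le v_i^j$ for all $i,j$. A multivariate convex risk measure is a map $R:\mathbb{L}^J\to 2^{\mathbb{R}^J}$ such that: (A1) $u\le v$ implies $R(u)\supseteq R(v)$; (A2) $R(u+z)=R(u)+z$ for all $z\in\mathbb{R}^J$; (A3) $R(u)\notin\{\emptyset,\mathbb{R}^J\}$;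 (A4) $R(\gamma u+(1-\gamma)v)\supseteq\gamma R(u)+(1-\gamma)R(v)$ for $\gamma\in(0,1)$; (A5) the acceptance set $\mathcal{A}=\{u\in\mathbb{L}^J\mid 0\in R(u)\}$ is closed. $\mathbb{M}_1^J$ denotes the set of $J$-tuples $\mu=(\mu^1,\dots,\mu^J)$ of probability measures on $\Omega$, with $\mu_i=(\mu_i^1,\dots,\mu_i^J)^{\mathsf T}$, and $\mathbb{E}^\mu[u]=\sum_{i\in\Omega}\mu_i\cdot u_i$, where $\cdot$ is the componentwise (Hadamard) product. The minimal penalty function is $\beta(\mu,w)=\sup_{u\in\mathcal{A}}w^{\mathsf T}\mathbb{E}^\mu[u]$ for $\mu\in\mathbb{M}_1^J$, $w\in\mathbb{R}^J_+\setminus\{0\}$; it is known that $\inf_{z\in R(u)}w^{\mathsf T}z=\sup_{\mu\in\mathbb{M}_1^J}(w^{\mathsf T}\mathbb{E}^\mu[u]-\beta(\mu,w))$. Problem data: $A\in\mathbb{R}^{K\times M}$, $b\in\mathbb{R}^K$, $C\in\mathbb{R}^{J\times M}$, random $W\in\mathbb{L}^{L\times N}$, $T\in\mathbb{L}^{L\times M}$, $h\in\mathbb{L}^L$, $Q\in\mathbb{L}^{J\times N}$; $\mathcal{X}=\{(x,y)\in\mathbb{R}^M_+\times\mathbb{L}^N_+\mid Ax=b,\ T_ix+W_iy_i=h_i\ \forall i\in\Omega\}$, assumed nonempty and compact; $Cx+Qy$ has realizations $Cx+Q_iy_i$. For each $i\in\Omega$, $\mathcal{F}_i=\{(x_i,y_i)\in\mathbb{R}^M_+\times\mathbb{R}^N_+\mid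 Ax_i=b,\ T_ix_i+W_iy_i=h_i\}$, assumed nonempty and compact. $\mathscr{P}_1(w)$ is the optimal value of $\min w^{\mathsf T}z$ s.t. $z\in R(Cx+Qy)$, $(x,y)\in\mathcal{X}$, $z\in\mathbb{R}^J$. *)

theory Defs
  imports "HOL-Analysis.Analysis"
begin

text \<open>Random vectors on the finite sample space (a finite type 'w) are functions
  'w \<Rightarrow> real^'j.  Functions carry the product topology (library instance),
  which for a finite index type is the usual Euclidean topology.\<close>

definition hadamard :: "real^'j \<Rightarrow> real^'j \<Rightarrow> real^'j" where
  "hadamard a b = (\<chi> j. a $ j * b $ j)"

definition acceptance_set :: "(('w \<Rightarrow> real^'j) \<Rightarrow> (real^'j) set) \<Rightarrow> ('w \<Rightarrow> real^'j) set" where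
  "acceptance_set R = {u. 0 \<in> R u}"

definition multivariate_convex_risk_measure ::
  "(('w \<Rightarrow> real^'j) \<Rightarrow> (real^'j) set) \<Rightarrow> bool" where
  "multivariate_convex_risk_measure R \<longleftrightarrow>
     (\<forall>u v. u \<le> v \<longrightarrow> R v \<subseteq> R u) \<and>
     (\<forall>u z. R (\<lambda>i. u i + z) = (\<lambda>x. x + z) ` R u) \<and>
     (\<forall>u. R u \<noteq> {} \<and> R u \<noteq> UNIV) \<and>
     (\<forall>u v \<gamma>. 0 < \<gamma> \<and> \<gamma> < 1 \<longrightarrow>
        {\<gamma> *\<^sub>R a + (1 - \<gamma>) *\<^sub>R c | a c. a \<in> R u \<and> c \<in> R v}
          \<subseteq> R (\<lambda>i. \<gamma> *\<^sub>R u i + (1 - \<gamma>) *\<^sub>R v i)) \<and>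
     closed (acceptance_set R)"

text \<open>J-tuples of probability measures on the finite sample space: mu i $ j is the
  mass of the j-th measure at the outcome i.\<close>
definition prob_tuples :: "('w::finite \<Rightarrow> real^'j) set" where
  "prob_tuples = {\<mu>. (\<forall>i j. 0 \<le> \<mu> i $ j) \<and> (\<forall>j. (\<Sum>i\<in>UNIV. \<mu> i $ j) = 1)}"

definition expect_mu :: "('w::finite \<Rightarrow> real^'j) \<Rightarrow> ('w \<Rightarrow> real^'j) \<Rightarrow> real^'j" where
  "expect_mu \<mu> u = (\<Sum>i\<in>UNIV. hadamard (\<mu> i) (u i))"

definition min_penalty ::
  "(('w::finite \<Rightarrow> real^'j) \<Rightarrow> (real^'j) set) \<Rightarrow> ('w \<Rightarrow> real^'j) \<Rightarrow> real^'j \<Rightarrow> ereal" where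
  "min_penalty R \<mu> w = (SUP u \<in> acceptance_set R. ereal (w \<bullet> expect_mu \<mu> u))"

definition feasible_X ::
  "real^'m^'k \<Rightarrow> real^'k \<Rightarrow> ('w \<Rightarrow> real^'m^'l) \<Rightarrow> ('w \<Rightarrow> real^'n^'l) \<Rightarrow> ('w \<Rightarrow> real^'l)
   \<Rightarrow> ((real^'m) \<times> ('w \<Rightarrow> real^'n)) set" where
  "feasible_X A b T W h = {(x, y). 0 \<le> x \<and> (\<forall>i. 0 \<le> y i) \<and> A *v x = b \<and>
       (\<forall>i. T i *v x + W i *v y i = h i)}"

definition feasible_F ::
  "real^'m^'k \<Rightarrow> real^'k \<Rightarrow> ('w \<Rightarrow> real^'m^'l) \<Rightarrow> ('w \<Rightarrow> real^'n^'l) \<Rightarrow> ('w \<Rightarrow> real^'l)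
   \<Rightarrow> 'w \<Rightarrow> ((real^'m) \<times> (real^'n)) set" where
  "feasible_F A b T W h i = {(xi, yi). 0 \<le> xi \<and> 0 \<le> yi \<and> A *v xi = b \<and>
       T i *v xi + W i *v yi = h i}"

definition P1 ::
  "(('w \<Rightarrow> real^'j) \<Rightarrow> (real^'j) set) \<Rightarrow> real^'m^'k \<Rightarrow> real^'k \<Rightarrow> real^'m^'j
   \<Rightarrow> ('w \<Rightarrow> real^'m^'l) \<Rightarrow> ('w \<Rightarrow> real^'n^'l) \<Rightarrow> ('w \<Rightarrow> real^'l) \<Rightarrow> ('w \<Rightarrow> real^'n^'j)
   \<Rightarrow> real^'j \<Rightarrow> ereal" where
  "P1 R A b C T W h Q w =
     Inf {ereal (w \<bullet> z) | z x y. (x, y) \<in> feasible_X A b T W h \<and>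
                                 z \<in> R (\<lambda>i. C *v x + Q i *v y i)}"

definition f_scen ::
  "real^'m^'k \<Rightarrow> real^'k \<Rightarrow> real^'m^'j \<Rightarrow> ('w \<Rightarrow> real^'m^'l) \<Rightarrow> ('w \<Rightarrow> real^'n^'l)
   \<Rightarrow> ('w \<Rightarrow> real^'l) \<Rightarrow> ('w \<Rightarrow> real^'n^'j) \<Rightarrow> ('w \<Rightarrow> real)
   \<Rightarrow> 'w \<Rightarrow> real^'j \<Rightarrow> real^'m \<Rightarrow> real^'j \<Rightarrow> ereal" where
  "f_scen A b C T W h Q p i mui lami w =
     (INF xy \<in> feasible_F A b T W h i.
        ereal (w \<bullet> hadamard mui (C *v fst xy + Q i *v snd xy) + p i * (lami \<bullet> fst xy)))"

end

theory Submission
  imports Defs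
begin


lemma lin_nonneg:
  fixes L k bb :: real
  assumes "\<And>t. 0 \<le> t \<Longrightarrow> bb < L + k * t" shows "0 \<le> k"
proof (rule ccontr)
  assume k: "\<not> 0 \<le> k"
  define t where "t = (\<bar>L\<bar> + \<bar>bb\<bar> + 1) / (- k)"
  have k': "0 < - k" using k by simp
  have t0: "0 \<le> t" unfolding t_def using k' by (intro divide_nonneg_pos) auto
  have "k * t = - (\<bar>L\<bar> + \<bar>bb\<bar> + 1)" using k' by (simp add: t_def field_simps)
  then have "L + k * t < bb" by linarith
  with assms[OF t0] show False by simp
qed

lemma lin_zero:
  fixes L k bb :: real
  assumes "\<And>t. bb < L + k * t" shows "k = 0"
proof -
  have "0 \<le> k" using assms by (intro lin_nonneg) auto
  moreover have "0 \<le> - k"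
  proof (rule lin_nonneg[of bb L])
    fix t :: real assume "0 \<le> t"
    show "bb < L + - k * t" using assms[of "- t"] by simp
  qed
  ultimately show ?thesis by simp
qed

locale ts =
  fixes p :: "'w::finite \<Rightarrow> real"
    and R :: "('w \<Rightarrow> real^'j) \<Rightarrow> (real^'j) set"
    and A :: "real^'m^'k" and b :: "real^'k" and C :: "real^'m^'j"
    and W :: "'w \<Rightarrow> real^'n^'l" and T :: "'w \<Rightarrow> real^'m^'l"
    and h :: "'w \<Rightarrow> real^'l" and Q :: "'w \<Rightarrow> real^'n^'j"
    and w :: "real^'j"
  assumes ppos: "\<forall>i. p i > 0" and psum: "(\<Sum>i\<in>UNIV. p i) = 1"
    and risk: "multivariate_convex_risk_measure R"
    and Xne: "feasible_X A b T W h \<noteq> {}"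
    and Fc: "\<forall>i. feasible_F A b T W h i \<noteq> {} \<and> compact (feasible_F A b T W h i)"
    and w0: "0 \<le> w"
begin

abbreviation "Acc \<equiv> acceptance_set R"

lemma R_iff: "z \<in> R u \<longleftrightarrow> (\<lambda>i. u i - z) \<in> Acc"
proof -
  have "R (\<lambda>i. u i + - z) = (\<lambda>x. x + - z) ` R u"
    using risk unfolding multivariate_convex_risk_measure_def by blast
  then have "(\<lambda>i. u i - z) \<in> Acc \<longleftrightarrow> 0 \<in> (\<lambda>x. x + - z) ` R u"
    by (simp add: acceptance_set_def)
  also have "\<dots> \<longleftrightarrow> z \<in> R u"
    by (auto simp: image_iff)
  finally show ?thesis by simp
qed

lemma Acc_lower: "a \<in> Acc \<Longrightarrow> v \<le> a \<Longrightarrow> v \<in> Acc"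
  using risk unfolding multivariate_convex_risk_measure_def acceptance_set_def by blast

lemma Acc_convex: "a \<in> Acc \<Longrightarrow> c \<in> Acc \<Longrightarrow> 0 \<le> u \<Longrightarrow> 0 \<le> v \<Longrightarrow> u + v = 1
   \<Longrightarrow> (\<lambda>i. u *\<^sub>R a i + v *\<^sub>R c i) \<in> Acc"
proof -
  assume a: "a \<in> Acc" and c: "c \<in> Acc" and u: "0 \<le> u" "0 \<le> v" "u + v = 1"
  show ?thesis
  proof (cases "u = 0 \<or> v = 0")
    case True then show ?thesis using a c u by (auto)
  next
    case False
    then have "0 < u" "u < 1" using u by auto
    then have "{u *\<^sub>R a' + (1 - u) *\<^sub>R c' | a' c'. a' \<in> R a \<and> c' \<in> R c}
          \<subseteq> R (\<lambda>i. u *\<^sub>R a i + (1 - u) *\<^sub>R c i)"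
      using risk unfolding multivariate_convex_risk_measure_def by blast
    moreover have "0 \<in> R a" "0 \<in> R c" using a c by (auto simp: acceptance_set_def)
    ultimately have "u *\<^sub>R 0 + (1 - u) *\<^sub>R 0 \<in> R (\<lambda>i. u *\<^sub>R a i + (1 - u) *\<^sub>R c i)" by blast
    moreover have "1 - u = v" using u by simp
    ultimately show ?thesis by (simp add: acceptance_set_def)
  qed
qed

definition "Fp = {(x::real^'m^'w, y::real^'n^'w). \<forall>i. (x$i, y$i) \<in> feasible_F A b T W h i}"
definition "uu x y i = C *v (x$i) + Q i *v (y$i)"
definition "xbar x = (\<Sum>i\<in>UNIV. p i *\<^sub>R (x::real^'m^'w)$i)"
definition "dd x = (\<chi> i. x$i - xbar x)"
definition "Acc' = {a :: real^'j^'w. (\<lambda>i. a$i) \<in> Acc}"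
definition "G = Fp \<times> Acc' \<times> {(z,s). w \<bullet> z \<le> s}"
definition "Lmap = (\<lambda>((x,y),a,z,s). ((\<chi> i. uu x y i - a$i - z), dd x, s::real))"
definition "K = Lmap ` G"

lemma convex_F: "convex (feasible_F A b T W h i)"
  unfolding convex_def
proof (intro ballI allI impI)
  fix xy1 xy2 and u v :: real
  assume m: "xy1 \<in> feasible_F A b T W h i" "xy2 \<in> feasible_F A b T W h i" and uv: "0 \<le> u" "0 \<le> v" "u + v = 1"
  obtain x1 y1 x2 y2 where e: "xy1 = (x1,y1)" "xy2 = (x2,y2)" by fastforce
  have f: "0 \<le> x1" "0 \<le> y1" "A *v x1 = b" "T i *v x1 + W i *v y1 = h i"
          "0 \<le> x2" "0 \<le> y2" "A *v x2 = b" "T i *v x2 + W i *v y2 = h i"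
    using m by (auto simp: feasible_F_def e)
  have "A *v (u *\<^sub>R x1 + v *\<^sub>R x2) = u *\<^sub>R (A *v x1) + v *\<^sub>R (A *v x2)"
    by (simp add: matrix_vector_right_distrib matrix_vector_mult_scaleR)
  also have "\<dots> = b" using f uv by (simp flip: scaleR_add_left)
  finally have 1: "A *v (u *\<^sub>R x1 + v *\<^sub>R x2) = b" .
  have "T i *v (u *\<^sub>R x1 + v *\<^sub>R x2) + W i *v (u *\<^sub>R y1 + v *\<^sub>R y2)
        = u *\<^sub>R (T i *v x1 + W i *v y1) + v *\<^sub>R (T i *v x2 + W i *v y2)"
    by (simp add: matrix_vector_right_distrib matrix_vector_mult_scaleR scaleR_add_right algebra_simps)
  also have "\<dots> = h i" using f uv by (simp flip: scaleR_add_left)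
  finally have 2: "T i *v (u *\<^sub>R x1 + v *\<^sub>R x2) + W i *v (u *\<^sub>R y1 + v *\<^sub>R y2) = h i" .
  have 3: "0 \<le> u *\<^sub>R x1 + v *\<^sub>R x2" "0 \<le> u *\<^sub>R y1 + v *\<^sub>R y2"
    using f uv by (auto intro!: add_nonneg_nonneg scaleR_nonneg_nonneg)
  show "u *\<^sub>R xy1 + v *\<^sub>R xy2 \<in> feasible_F A b T W h i"
    using 1 2 3 by (simp add: e feasible_F_def)
qed

lemma convex_Fp: "convex Fp"
  unfolding convex_def Fp_def
proof (clarsimp)
  fix x1 y1 x2 y2 and u v :: real and i
  assume "\<forall>i. (x1 $ i, y1 $ i) \<in> feasible_F A b T W h i" "\<forall>i. (x2 $ i, y2 $ i) \<in> feasible_F A b T W h i"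
    "0 \<le> u" "0 \<le> v" "u + v = 1"
  then have "u *\<^sub>R (x1 $ i, y1 $ i) + v *\<^sub>R (x2 $ i, y2 $ i) \<in> feasible_F A b T W h i"
    using convex_F[of i, unfolded convex_def] by blast
  then show "(u *\<^sub>R x1 $ i + v *\<^sub>R x2 $ i, u *\<^sub>R y1 $ i + v *\<^sub>R y2 $ i) \<in> feasible_F A b T W h i"
    by simp
qed

lemma convex_Acc': "convex Acc'"
  unfolding convex_def Acc'_def
proof (clarsimp)
  fix x y and u v :: real
  assume "($) x \<in> Acc" "($) y \<in> Acc" "0 \<le> u" "0 \<le> v" "u + v = 1"
  then have "(\<lambda>i. u *\<^sub>R x$i + v *\<^sub>R y$i) \<in> Acc" by (rule Acc_convex)
  moreover have "($) (u *\<^sub>R x + v *\<^sub>R y) = (\<lambda>i. u *\<^sub>R x$i + v *\<^sub>R y$i)" by auto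
  ultimately show "($) (u *\<^sub>R x + v *\<^sub>R y) \<in> Acc" by simp
qed

lemma uu_add: "uu (x1 + x2) (y1 + y2) i = uu x1 y1 i + uu x2 y2 i"
  by (simp add: uu_def matrix_vector_right_distrib)
lemma uu_scale: "uu (c *\<^sub>R x) (c *\<^sub>R y) i = c *\<^sub>R uu x y i"
  by (simp add: uu_def matrix_vector_mult_scaleR scaleR_add_right)
lemma xbar_add: "xbar (x1 + x2) = xbar x1 + xbar x2"
  by (simp add: xbar_def scaleR_add_right sum.distrib)
lemma xbar_scale: "xbar (c *\<^sub>R x) = c *\<^sub>R xbar x"
  by (simp add: xbar_def scaleR_sum_right mult.commute)
lemma dd_add: "dd (x1 + x2) = dd x1 + dd x2"
  by (simp add: dd_def xbar_add vec_eq_iff)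
lemma dd_scale: "dd (c *\<^sub>R x) = c *\<^sub>R dd x"
  by (simp add: dd_def xbar_scale vec_eq_iff scaleR_diff_right)

lemma convex_half: "convex {(z,s). w \<bullet> z \<le> s}"
proof -
  have "{(z,s). w \<bullet> z \<le> s} = {v. (w, -1::real) \<bullet> v \<le> 0}" by (auto simp: inner_prod_def)
  then show ?thesis by (simp add: convex_halfspace_le)
qed

lemma linear_Lmap: "linear Lmap"
proof (rule linearI)
  fix g1 g2 :: "((real^'m^'w) \<times> (real^'n^'w)) \<times> (real^'j^'w) \<times> (real^'j) \<times> real"
  obtain x1 y1 a1 z1 s1 where 1: "g1 = ((x1,y1),a1,z1,s1)" by (metis prod.exhaust)
  obtain x2 y2 a2 z2 s2 where 2: "g2 = ((x2,y2),a2,z2,s2)" by (metis prod.exhaust)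
  show "Lmap (g1 + g2) = Lmap g1 + Lmap g2"
    by (simp add: 1 2 Lmap_def uu_add dd_add vec_eq_iff)
next
  fix c :: real and g :: "((real^'m^'w) \<times> (real^'n^'w)) \<times> (real^'j^'w) \<times> (real^'j) \<times> real"
  obtain x y a z s where 1: "g = ((x,y),a,z,s)" by (metis prod.exhaust)
  show "Lmap (c *\<^sub>R g) = c *\<^sub>R Lmap g"
    by (simp add: 1 Lmap_def uu_scale dd_scale vec_eq_iff algebra_simps)
qed

lemma convex_K: "convex K"
  unfolding K_def G_def
  by (intro convex_linear_image linear_Lmap convex_Times convex_Fp convex_Acc' convex_half)

lemma compact_Fp: "compact Fp"
proof (rule compact_eq_bounded_closed[THEN iffD2], rule conjI)
  have "bounded (feasible_F A b T W h i)" for i using Fc compact_imp_bounded by blast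
  then have "\<forall>i. \<exists>B. \<forall>v\<in>feasible_F A b T W h i. norm v \<le> B"
    by (simp add: bounded_iff)
  then obtain B where B: "\<And>i v. v \<in> feasible_F A b T W h i \<Longrightarrow> norm v \<le> B i" by metis
  show "bounded Fp"
    unfolding bounded_iff
  proof (intro exI ballI)
    fix xy assume "xy \<in> Fp"
    then obtain x y where e: "xy = (x,y)" and m: "\<And>i. (x$i, y$i) \<in> feasible_F A b T W h i"
      by (auto simp: Fp_def)
    have "norm x \<le> (\<Sum>i\<in>UNIV. norm (x$i))"
      unfolding norm_vec_def by (rule L2_set_le_sum) simp
    also have "\<dots> \<le> (\<Sum>i\<in>UNIV. B i)"
      by (rule sum_mono) (metis B m norm_fst_le order_trans)
    finally have 1: "norm x \<le> (\<Sum>i\<in>UNIV. B i)" .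
    have "norm y \<le> (\<Sum>i\<in>UNIV. norm (y$i))"
      unfolding norm_vec_def by (rule L2_set_le_sum) simp
    also have "\<dots> \<le> (\<Sum>i\<in>UNIV. B i)"
      by (rule sum_mono) (metis B m norm_snd_le order_trans)
    finally have 2: "norm y \<le> (\<Sum>i\<in>UNIV. B i)" .
    show "norm xy \<le> 2 * (\<Sum>i\<in>UNIV. B i)"
      using norm_Pair_le[of x y] 1 2 e by simp
  qed
next
  have "Fp = (\<Inter>i. (\<lambda>(x,y). (x$i, y$i)) -` feasible_F A b T W h i)"
    by (auto simp: Fp_def)
  moreover have "closed ((\<lambda>(x::real^'m^'w,y::real^'n^'w). (x$i, y$i)) -` feasible_F A b T W h i)" for i
  proof (rule closed_vimage)
    show "closed (feasible_F A b T W h i)" using Fc compact_imp_closed by blast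
    show "continuous_on UNIV (\<lambda>(x::real^'m^'w,y::real^'n^'w). (x$i, y$i))"
      unfolding case_prod_beta' by (intro continuous_intros)
  qed
  ultimately show "closed Fp" by auto
qed

lemma xbar_const: "xbar (\<chi> i. x0) = x0"
proof -
  have "xbar (\<chi> i. x0) = (\<Sum>i\<in>UNIV. p i) *\<^sub>R x0" by (simp add: xbar_def scaleR_sum_left)
  then show ?thesis using psum by simp
qed

lemma X_to_Fp: "(x0, y0) \<in> feasible_X A b T W h \<Longrightarrow> ((\<chi> i. x0), (\<chi> i. y0 i)) \<in> Fp \<and> dd (\<chi> i. x0) = 0"
  by (auto simp: feasible_X_def feasible_F_def Fp_def dd_def xbar_const vec_eq_iff)

lemma Fp_to_X: "(x, y) \<in> Fp \<Longrightarrow> dd x = 0 \<Longrightarrow> (xbar x, \<lambda>i. y$i) \<in> feasible_X A b T W h \<and> (\<forall>i. x$i = xbar x)"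
proof -
  assume a: "(x, y) \<in> Fp" "dd x = 0"
  then have e: "\<forall>i. x$i = xbar x" by (auto simp: dd_def vec_eq_iff)
  then show ?thesis using a(1) by (auto simp: feasible_X_def feasible_F_def Fp_def)
qed

lemma P1_le: "(x0, y0) \<in> feasible_X A b T W h \<Longrightarrow> z \<in> R (\<lambda>i. C *v x0 + Q i *v y0 i)
   \<Longrightarrow> P1 R A b C T W h Q w \<le> ereal (w \<bullet> z)"
  unfolding P1_def by (rule Inf_lower) blast

definition "Upair = (\<lambda>(x,y). (\<chi> i. uu x y i))"

lemma linear_dd: "linear dd"
  by (rule linearI) (simp_all add: dd_add dd_scale)
lemma linear_Upair: "linear Upair"
  by (rule linearI) (auto simp: Upair_def uu_add uu_scale vec_eq_iff)

lemma notin_closure: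
  assumes cP: "ereal c < P1 R A b C T W h Q w"
  shows "(0, 0, c) \<notin> closure K"
proof
  assume "(0, 0, c) \<in> closure K"
  then obtain v where v: "\<And>n. v n \<in> K" "v \<longlonglongrightarrow> (0, 0, c)"
    by (auto simp: closure_sequential)
  have "\<forall>n. \<exists>g. g \<in> G \<and> v n = Lmap g" using v(1) unfolding K_def by blast
  then obtain g where g: "\<And>n. g n \<in> G" "\<And>n. v n = Lmap (g n)" by metis
  have "\<forall>n. fst (g n) \<in> Fp" using g(1) unfolding G_def by (metis mem_Times_iff)
  then obtain l r where l: "l \<in> Fp" "strict_mono r" "((\<lambda>n. fst (g n)) \<circ> r) \<longlonglongrightarrow> l"
    using compact_imp_seq_compact[OF compact_Fp] unfolding seq_compact_def by metis
  obtain xs ys where lxy: "l = (xs, ys)" by fastforce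
  define x where "x n = fst (fst (g (r n)))" for n
  define y where "y n = snd (fst (g (r n)))" for n
  define a where "a n = fst (snd (g (r n)))" for n
  define z where "z n = fst (snd (snd (g (r n))))" for n
  define s where "s n = snd (snd (snd (g (r n))))" for n
  have gr: "g (r n) = ((x n, y n), a n, z n, s n)" for n by (simp add: x_def y_def a_def z_def s_def)
  have mem: "a n \<in> Acc'" "w \<bullet> z n \<le> s n" for n using g(1)[of "r n"] unfolding G_def gr by auto
  have vr: "v (r n) = ((\<chi> i. uu (x n) (y n) i - a n $ i - z n), dd (x n), s n)" for n
    using g(2)[of "r n"] by (simp add: gr Lmap_def)
  have xy_lim: "(\<lambda>n. (x n, y n)) \<longlonglongrightarrow> (xs, ys)"
    using l(3) lxy by (simp add: o_def x_def y_def)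
  have vlim: "(\<lambda>n. v (r n)) \<longlonglongrightarrow> (0, 0, c)"
    using LIMSEQ_subseq_LIMSEQ[OF v(2) l(2)] by (simp add: o_def)
  have dlim0: "(\<lambda>n. dd (x n)) \<longlonglongrightarrow> 0"
    using tendsto_fst[OF tendsto_snd[OF vlim]] by (simp add: vr)
  have slim: "s \<longlonglongrightarrow> c"
    using tendsto_snd[OF tendsto_snd[OF vlim]] by (simp add: vr)
  have Elim: "(\<lambda>n. fst (v (r n))) \<longlonglongrightarrow> 0"
    using tendsto_fst[OF vlim] by simp
  have bl_dd: "bounded_linear dd" using linear_dd linear_conv_bounded_linear by blast
  have bl_U: "bounded_linear Upair" using linear_Upair linear_conv_bounded_linear by blast
  have "(\<lambda>n. dd (x n)) \<longlonglongrightarrow> dd xs"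
    using bounded_linear.tendsto[OF bl_dd tendsto_fst[OF xy_lim]] by simp
  then have ddxs: "dd xs = 0" using dlim0 LIMSEQ_unique by blast
  have Ulim: "(\<lambda>n. Upair (x n, y n)) \<longlonglongrightarrow> Upair (xs, ys)"
    using bounded_linear.tendsto[OF bl_U xy_lim] by simp
  obtain X0 where X0: "(xbar xs, \<lambda>i. ys$i) \<in> feasible_X A b T W h" "\<forall>i. xs$i = xbar xs"
    using Fp_to_X[OF l(1)[unfolded lxy] ddxs] by blast
  define tt where "tt n = Upair (xs, ys) - Upair (x n, y n) + fst (v (r n))" for n
  have "tt \<longlonglongrightarrow> Upair (xs, ys) - Upair (xs, ys) + 0"
    unfolding tt_def by (intro tendsto_intros Ulim Elim)
  then have ttlim: "tt \<longlonglongrightarrow> 0" by simp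
  define rho where "rho n = norm (tt n)" for n
  have rholim: "rho \<longlonglongrightarrow> 0" unfolding rho_def using ttlim tendsto_norm_zero by blast
  define u0 where "u0 = (\<lambda>i. C *v xbar xs + Q i *v ys $ i)"
  have u0: "u0 i = uu xs ys i" for i using X0(2) by (simp add: u0_def uu_def)
  have bound: "P1 R A b C T W h Q w \<le> ereal (s n + rho n * (w \<bullet> 1))" for n
  proof -
    have tcomp: "tt n $ i $ j \<le> rho n" for i j
      unfolding rho_def
      by (metis component_le_norm_cart Finite_Cartesian_Product.norm_nth_le abs_le_D1 order_trans)
    have aeq: "a n $ i = uu xs ys i - z n - tt n $ i" for i
      by (simp add: tt_def vr Upair_def)
    have "(\<lambda>i. u0 i - (z n + rho n *\<^sub>R 1)) \<in> Acc"
    proof (rule Acc_lower)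
      show "($) (a n) \<in> Acc" using mem(1) by (simp add: Acc'_def)
      show "(\<lambda>i. u0 i - (z n + rho n *\<^sub>R 1)) \<le> ($) (a n)"
        unfolding le_fun_def less_eq_vec_def using tcomp by (simp add: aeq u0 algebra_simps)
    qed
    then have "z n + rho n *\<^sub>R 1 \<in> R u0" by (simp add: R_iff)
    then have "P1 R A b C T W h Q w \<le> ereal (w \<bullet> (z n + rho n *\<^sub>R 1))"
      using P1_le[OF X0(1)] by (simp add: u0_def)
    also have "w \<bullet> (z n + rho n *\<^sub>R 1) \<le> s n + rho n * (w \<bullet> 1)"
      using mem(2)[of n] by (simp add: inner_add_right)
    finally show ?thesis by simp
  qed
  then obtain P where P: "P1 R A b C T W h Q w = ereal P"
    using cP by (cases "P1 R A b C T W h Q w") auto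
  have "(\<lambda>n. s n + rho n * (w \<bullet> 1)) \<longlonglongrightarrow> c + 0 * (w \<bullet> 1)"
    by (intro tendsto_intros slim rholim)
  then have "P \<le> c" using bound P by (intro LIMSEQ_le_const) auto
  then show False using cP P by simp
qed

lemma Acc_ne: "\<exists>a0. a0 \<in> Acc'"
proof -
  have "\<forall>u. R u \<noteq> {} \<and> R u \<noteq> UNIV"
    using risk unfolding multivariate_convex_risk_measure_def by (elim conjE) assumption
  then obtain z0 where "z0 \<in> R (\<lambda>i. 0)" by blast
  then have "(\<lambda>i. 0 - z0) \<in> Acc" by (simp add: R_iff)
  moreover have "($) (\<chi> (i::'w). - z0) = (\<lambda>i. (0::real^'j) - z0)" by (rule ext) simp
  ultimately have "(\<chi> i. - z0) \<in> Acc'" unfolding Acc'_def by (metis (mono_tags) mem_Collect_eq)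
  then show ?thesis by blast
qed


end
context ts begin
lemma separation:
  assumes cP: "ereal c < P1 R A b C T W h Q w"
  obtains \<alpha> \<delta> \<gamma> bb where
    "\<And>x y a z s. (x,y) \<in> Fp \<Longrightarrow> a \<in> Acc' \<Longrightarrow> w \<bullet> z \<le> s \<Longrightarrow>
        bb < \<alpha> \<bullet> (\<chi> i. uu x y i - a$i - z) + \<delta> \<bullet> dd x + \<gamma> * s"
    "\<gamma> * c < bb" "0 < \<gamma>" "\<And>i j. 0 \<le> \<alpha> $ i $ j" "\<And>j. (\<Sum>i\<in>UNIV. \<alpha> $ i $ j) = \<gamma> * w $ j"
proof -
  obtain aa bb where sep: "inner aa (0,0,c) < bb" "\<forall>v\<in>closure K. inner aa v > bb"
    using separating_hyperplane_closed_point[OF convex_closure[OF convex_K] closed_closure notin_closure[OF cP]]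
    by blast
  obtain \<alpha> \<delta> \<gamma> where aa: "aa = (\<alpha>, \<delta>, \<gamma>)" by (metis prod.exhaust)
  have base: "bb < \<alpha> \<bullet> (\<chi> i. uu x y i - a$i - z) + \<delta> \<bullet> dd x + \<gamma> * s"
    if "(x,y) \<in> Fp" "a \<in> Acc'" "w \<bullet> z \<le> s" for x y a z s
  proof -
    have "((x,y),a,z,s) \<in> G" using that by (simp add: G_def)
    then have "Lmap ((x,y),a,z,s) \<in> K" unfolding K_def by (rule imageI)
    then have "Lmap ((x,y),a,z,s) \<in> closure K" using closure_subset by blast
    then show ?thesis using sep(2) by (auto simp: aa Lmap_def inner_prod_def)
  qed
  have gc: "\<gamma> * c < bb" using sep(1) by (simp add: aa inner_prod_def)
  obtain x0 y0 where xy0: "(x0, y0) \<in> feasible_X A b T W h" using Xne by auto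
  define xF where "xF = (\<chi> (i::'w). x0)"
  define yF where "yF = (\<chi> (i::'w). y0 i)"
  have F0: "(xF, yF) \<in> Fp" "dd xF = 0" using X_to_Fp[OF xy0] by (auto simp: xF_def yF_def)
  obtain a0 where a0: "a0 \<in> Acc'" using Acc_ne by blast
  define V0 where "V0 = (\<chi> i. uu xF yF i - a0$i)"
  have g0: "0 \<le> \<gamma>"
  proof (rule lin_nonneg)
    fix t :: real assume "0 \<le> t"
    then show "bb < \<alpha> \<bullet> V0 + \<gamma> * t"
      using base[OF F0(1) a0, of 0 t] by (simp add: F0 V0_def)
  qed
  have anon: "0 \<le> \<alpha> $ i $ j" for i j
  proof (rule lin_nonneg)
    fix t :: real assume t: "0 \<le> t"
    define a1 where "a1 = a0 - t *\<^sub>R axis i (axis j 1)"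
    have "a1 \<in> Acc'"
      unfolding Acc'_def
    proof (simp, rule Acc_lower)
      show "($) a0 \<in> Acc" using a0 by (simp add: Acc'_def)
      show "($) a1 \<le> ($) a0" using t
        by (auto simp: le_fun_def less_eq_vec_def a1_def axis_def)
    qed
    moreover have "(\<chi> i. uu xF yF i - a1$i - 0) = V0 + t *\<^sub>R axis i (axis j 1)"
      by (simp add: V0_def a1_def vec_eq_iff)
    ultimately show "bb < \<alpha> \<bullet> V0 + \<alpha> $ i $ j * t"
      using base[OF F0(1), of a1 0 0]
      by (simp add: F0 inner_add_right inner_axis mult.commute)
  qed
  have asum: "(\<Sum>i\<in>UNIV. \<alpha> $ i $ j) = \<gamma> * w $ j" for j
  proof -
    have "\<gamma> * w $ j - (\<Sum>i\<in>UNIV. \<alpha> $ i $ j) = 0"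
    proof (rule lin_zero)
      fix t :: real
      have e: "(\<chi> i. uu xF yF i - a0$i - t *\<^sub>R axis j 1) = V0 - t *\<^sub>R (\<chi> i. axis j 1)"
        by (simp add: V0_def vec_eq_iff)
      have e2: "\<alpha> \<bullet> (\<chi> i. axis j (1::real)) = (\<Sum>i\<in>UNIV. \<alpha> $ i $ j)"
        by (simp only: inner_vec_def[of \<alpha>]) (simp add: inner_axis)
      show "bb < \<alpha> \<bullet> V0 + (\<gamma> * w $ j - (\<Sum>i\<in>UNIV. \<alpha> $ i $ j)) * t"
        using base[OF F0(1) a0, of "t *\<^sub>R axis j 1" "w \<bullet> (t *\<^sub>R axis j 1)"]
        unfolding e by (simp add: F0 e2 inner_diff_right inner_axis algebra_simps)
    qed
    then show ?thesis by simp
  qed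
  have gpos: "0 < \<gamma>"
  proof (rule ccontr)
    assume "\<not> 0 < \<gamma>"
    then have g: "\<gamma> = 0" using g0 by simp
    have "\<alpha> $ i $ j = 0" for i j
    proof -
      have "(\<Sum>i\<in>UNIV. \<alpha> $ i $ j) = 0" using asum g by simp
      then show ?thesis using anon sum_nonneg_eq_0_iff[of UNIV "\<lambda>i. \<alpha> $ i $ j"] by auto
    qed
    then have "\<alpha> = 0" by (simp add: vec_eq_iff)
    then show False using base[OF F0(1) a0, of 0 0] gc g by (simp add: F0)
  qed
  show ?thesis using that base gc gpos anon asum by blast
qed

end
context ts begin
lemma construct:
  assumes sepA: "\<And>x y a z s. (x,y) \<in> Fp \<Longrightarrow> a \<in> Acc' \<Longrightarrow> w \<bullet> z \<le> s \<Longrightarrow>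
        bb < \<alpha> \<bullet> (\<chi> i. uu x y i - a$i - z) + \<delta> \<bullet> dd x + \<gamma> * s"
    and gc: "\<gamma> * c < bb" and gpos: "0 < \<gamma>" and anon: "\<And>i j. 0 \<le> \<alpha> $ i $ j"
    and asum: "\<And>j. (\<Sum>i\<in>UNIV. \<alpha> $ i $ j) = \<gamma> * w $ j"
  shows "\<exists>mu lam. mu \<in> prob_tuples \<and> (\<Sum>i\<in>UNIV. p i *\<^sub>R lam i) = 0 \<and>
     ereal c < (\<Sum>i\<in>UNIV. f_scen A b C T W h Q p i (mu i) (lam i) w) - min_penalty R mu w"
proof -
  define mu where "mu i = (\<chi> j. if w$j = 0 then p i else \<alpha>$i$j / (\<gamma> * w$j))" for i
  define D where "D = (\<Sum>k\<in>UNIV. \<delta>$k)"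
  define lam where "lam i = (1 / (\<gamma> * p i)) *\<^sub>R (\<delta>$i - p i *\<^sub>R D)" for i
  have azero: "\<alpha>$i$j = 0" if "w$j = 0" for i j
  proof -
    have "(\<Sum>i\<in>UNIV. \<alpha> $ i $ j) = 0" using asum that by simp
    then show ?thesis using anon sum_nonneg_eq_0_iff[of UNIV "\<lambda>i. \<alpha> $ i $ j"] by auto
  qed
  have wpos: "0 < w$j" if "w$j \<noteq> 0" for j
    using w0 that by (simp add: less_eq_vec_def) (metis order_le_less)
  have mu_prob: "mu \<in> prob_tuples"
    unfolding prob_tuples_def
  proof (intro CollectI conjI allI)
    fix i j show "0 \<le> mu i $ j"
      using ppos[rule_format, of i] anon[of i j] gpos wpos[of j] by (auto simp: mu_def intro!: divide_nonneg_pos)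
  next
    fix j show "(\<Sum>i\<in>UNIV. mu i $ j) = 1"
    proof (cases "w$j = 0")
      case True then show ?thesis by (simp add: mu_def psum)
    next
      case False
      then have "(\<Sum>i\<in>UNIV. mu i $ j) = (\<Sum>i\<in>UNIV. \<alpha>$i$j) / (\<gamma> * w$j)"
        by (simp add: mu_def sum_divide_distrib)
      then show ?thesis using False gpos by (simp add: asum)
    qed
  qed
  have key: "w \<bullet> hadamard (mu i) v = (\<alpha>$i \<bullet> v) / \<gamma>" for i v
  proof -
    have "w \<bullet> hadamard (mu i) v = (\<Sum>j\<in>UNIV. w$j * (mu i $ j * v $ j))"
      by (simp add: hadamard_def inner_vec_def)
    also have "\<dots> = (\<Sum>j\<in>UNIV. \<alpha>$i$j * v$j / \<gamma>)"
    proof (rule sum.cong)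
      fix j
      show "w$j * (mu i $ j * v $ j) = \<alpha>$i$j * v$j / \<gamma>"
      proof (cases "w$j = 0")
        case True then show ?thesis by (simp add: azero)
      next
        case False then show ?thesis using gpos by (simp add: mu_def field_simps)
      qed
    qed simp
    also have "\<dots> = (\<alpha>$i \<bullet> v) / \<gamma>" by (simp add: inner_vec_def sum_divide_distrib)
    finally show ?thesis .
  qed
  have lam_sum: "(\<Sum>i\<in>UNIV. p i *\<^sub>R lam i) = 0"
  proof -
    have "p i *\<^sub>R lam i = (1/\<gamma>) *\<^sub>R (\<delta>$i - p i *\<^sub>R D)" for i
      using ppos[rule_format, of i] by (simp add: lam_def)
    then have "(\<Sum>i\<in>UNIV. p i *\<^sub>R lam i) = (\<Sum>i\<in>UNIV. (1/\<gamma>) *\<^sub>R (\<delta>$i - p i *\<^sub>R D))"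
      by simp
    also have "\<dots> = (1/\<gamma>) *\<^sub>R ((\<Sum>i\<in>UNIV. \<delta>$i) - (\<Sum>i\<in>UNIV. p i *\<^sub>R D))"
      by (simp only: scaleR_sum_right[symmetric] sum_subtractf)
    also have "\<dots> = (1/\<gamma>) *\<^sub>R (D - (\<Sum>i\<in>UNIV. p i) *\<^sub>R D)"
      by (simp only: D_def scaleR_sum_left)
    finally have "(\<Sum>i\<in>UNIV. p i *\<^sub>R lam i) = (1/\<gamma>) *\<^sub>R (D - (\<Sum>i\<in>UNIV. p i) *\<^sub>R D)" .
    then show ?thesis using psum by simp
  qed
  have lam_dd: "(\<Sum>i\<in>UNIV. p i * (lam i \<bullet> x$i)) = (\<delta> \<bullet> dd x) / \<gamma>" for x
  proof -
    have "\<delta> \<bullet> dd x = (\<Sum>i\<in>UNIV. \<delta>$i \<bullet> (x$i - xbar x))"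
      by (simp only: inner_vec_def[of \<delta>]) (simp add: dd_def)
    also have "\<dots> = (\<Sum>i\<in>UNIV. \<delta>$i \<bullet> x$i) - (\<Sum>i\<in>UNIV. \<delta>$i) \<bullet> xbar x"
      by (simp add: inner_diff_right sum_subtractf inner_sum_left)
    finally have "\<delta> \<bullet> dd x = (\<Sum>i\<in>UNIV. \<delta>$i \<bullet> x$i) - D \<bullet> xbar x"
      by (simp add: D_def)
    also have "D \<bullet> xbar x = (\<Sum>i\<in>UNIV. p i * (D \<bullet> x$i))"
      by (simp add: xbar_def inner_sum_right)
    finally have 1: "\<delta> \<bullet> dd x = (\<Sum>i\<in>UNIV. \<delta>$i \<bullet> x$i - p i * (D \<bullet> x$i))"
      by (simp add: sum_subtractf)
    have "p i * (lam i \<bullet> x$i) = (\<delta>$i \<bullet> x$i - p i * (D \<bullet> x$i)) / \<gamma>" for i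
      using ppos[rule_format, of i] gpos by (simp add: lam_def inner_diff_left field_simps)
    then show ?thesis by (simp add: 1 sum_divide_distrib)
  qed
  define g where "g i xy = w \<bullet> hadamard (mu i) (C *v fst xy + Q i *v snd xy) + p i * (lam i \<bullet> fst xy)"
    for i xy
  have gform: "g i xy = (\<alpha>$i \<bullet> (C *v fst xy + Q i *v snd xy)) / \<gamma> + p i * (lam i \<bullet> fst xy)" for i xy
    by (simp add: g_def key)
  have lin_g: "linear (g i)" for i
    by (rule linearI) (simp_all add: gform matrix_vector_right_distrib matrix_vector_mult_scaleR
        inner_add_right inner_add_left add_divide_distrib algebra_simps)
  have cont_g: "continuous_on S (g i)" for i S
    using lin_g linear_continuous_on linear_conv_bounded_linear by blast
  have "\<forall>i. \<exists>m. m \<in> feasible_F A b T W h i \<and> (\<forall>v\<in>feasible_F A b T W h i. g i m \<le> g i v)"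
    using Fc cont_g continuous_attains_inf by metis
  then obtain m where m: "\<And>i. m i \<in> feasible_F A b T W h i"
    "\<And>i v. v \<in> feasible_F A b T W h i \<Longrightarrow> g i (m i) \<le> g i v" by metis
  have fs: "f_scen A b C T W h Q p i (mu i) (lam i) w = ereal (g i (m i))" for i
    unfolding f_scen_def g_def[symmetric]
  proof (rule antisym)
    show "(INF xy\<in>feasible_F A b T W h i. ereal (g i xy)) \<le> ereal (g i (m i))"
      by (rule INF_lower2[OF m(1)]) simp
    show "ereal (g i (m i)) \<le> (INF xy\<in>feasible_F A b T W h i. ereal (g i xy))"
      by (rule INF_greatest) (simp add: m(2))
  qed
  define SG where "SG = (\<Sum>i\<in>UNIV. g i (m i))"
  have sumf: "(\<Sum>i\<in>UNIV. f_scen A b C T W h Q p i (mu i) (lam i) w) = ereal SG"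
    by (simp add: fs SG_def)
  define xs where "xs = (\<chi> i. fst (m i))"
  define ys where "ys = (\<chi> i. snd (m i))"
  have xyF: "(xs, ys) \<in> Fp" using m(1) by (simp add: Fp_def xs_def ys_def)
  have SGe: "SG = ((\<Sum>i\<in>UNIV. \<alpha>$i \<bullet> uu xs ys i) + \<delta> \<bullet> dd xs) / \<gamma>"
  proof -
    have "SG = (\<Sum>i\<in>UNIV. (\<alpha>$i \<bullet> uu xs ys i) / \<gamma>) + (\<Sum>i\<in>UNIV. p i * (lam i \<bullet> xs$i))"
      by (simp add: SG_def gform sum.distrib uu_def xs_def ys_def)
    then show ?thesis by (simp add: lam_dd sum_divide_distrib add_divide_distrib)
  qed
  have pen: "min_penalty R mu w \<le> ereal (SG - bb / \<gamma>)"
    unfolding min_penalty_def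
  proof (rule SUP_least)
    fix a assume aA: "a \<in> Acc"
    have ea: "($) (\<chi> i. a i) = a" by (rule ext) simp
    have a': "(\<chi> i. a i) \<in> Acc'" using aA by (simp add: Acc'_def ea)
    have "bb < \<alpha> \<bullet> (\<chi> i. uu xs ys i - (\<chi> i. a i)$i - 0) + \<delta> \<bullet> dd xs + \<gamma> * 0"
      using sepA[OF xyF a', of 0 0] by simp
    then have 1: "bb < (\<Sum>i\<in>UNIV. \<alpha>$i \<bullet> uu xs ys i) - (\<Sum>i\<in>UNIV. \<alpha>$i \<bullet> a i) + \<delta> \<bullet> dd xs"
      by (simp add: inner_vec_def[of \<alpha>] inner_diff_right sum_subtractf)
    have 2: "w \<bullet> expect_mu mu a = (\<Sum>i\<in>UNIV. \<alpha>$i \<bullet> a i) / \<gamma>"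
      by (simp add: expect_mu_def inner_sum_right key sum_divide_distrib)
    define Sa where "Sa = (\<Sum>i\<in>UNIV. \<alpha>$i \<bullet> a i)"
    define Su where "Su = (\<Sum>i\<in>UNIV. \<alpha>$i \<bullet> uu xs ys i) + \<delta> \<bullet> dd xs"
    have "Sa + bb \<le> Su" using 1 unfolding Sa_def Su_def by linarith
    then have "(Sa + bb) / \<gamma> \<le> Su / \<gamma>" using gpos by (intro divide_right_mono) auto
    then have "Sa / \<gamma> \<le> Su / \<gamma> - bb / \<gamma>" by (simp add: add_divide_distrib)
    then have "w \<bullet> expect_mu mu a \<le> SG - bb / \<gamma>"
      unfolding 2 SGe Sa_def Su_def .
    then show "ereal (w \<bullet> expect_mu mu a) \<le> ereal (SG - bb / \<gamma>)" by simp
  qed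
  have cb: "c < bb / \<gamma>" using gc gpos by (simp add: pos_less_divide_eq mult.commute)
  have "ereal c < ereal SG - min_penalty R mu w"
  proof (cases "min_penalty R mu w")
    case (real r) then show ?thesis using pen cb by simp
  next
    case PInf then show ?thesis using pen by simp
  next
    case MInf then show ?thesis by simp
  qed
  then have fin: "ereal c < (\<Sum>i\<in>UNIV. f_scen A b C T W h Q p i (mu i) (lam i) w) - min_penalty R mu w"
    by (simp only: sumf)
  show ?thesis by (intro exI[of _ mu] exI[of _ lam] conjI mu_prob lam_sum fin)
qed
end
context ts begin
lemma weak:
  assumes mu: "mu \<in> prob_tuples" and lam: "(\<Sum>i\<in>UNIV. p i *\<^sub>R lam i) = 0"
  shows "(\<Sum>i\<in>UNIV. f_scen A b C T W h Q p i (mu i) (lam i) w) - min_penalty R mu w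
         \<le> P1 R A b C T W h Q w"
  unfolding P1_def
proof (rule Inf_greatest, clarify)
  fix z x y
  assume xy: "(x, y) \<in> feasible_X A b T W h" and zR: "z \<in> R (\<lambda>i. C *v x + Q i *v y i)"
  define u where "u = (\<lambda>i. C *v x + Q i *v y i)"
  define E where "E = w \<bullet> expect_mu mu u"
  have Fi: "(x, y i) \<in> feasible_F A b T W h i" for i
    using xy by (auto simp: feasible_X_def feasible_F_def)
  have fi: "f_scen A b C T W h Q p i (mu i) (lam i) w \<le>
       ereal (w \<bullet> hadamard (mu i) (u i) + p i * (lam i \<bullet> x))" for i
    unfolding f_scen_def u_def by (rule INF_lower2[OF Fi]) simp
  have "(\<Sum>i\<in>UNIV. f_scen A b C T W h Q p i (mu i) (lam i) w) \<le>
       (\<Sum>i\<in>UNIV. ereal (w \<bullet> hadamard (mu i) (u i) + p i * (lam i \<bullet> x)))"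
    by (rule sum_mono) (rule fi)
  also have "\<dots> = ereal (E + (\<Sum>i\<in>UNIV. p i *\<^sub>R lam i) \<bullet> x)"
    by (simp add: E_def expect_mu_def inner_sum_right inner_sum_left sum.distrib)
  also have "\<dots> = ereal E" using lam by simp
  finally have 1: "(\<Sum>i\<in>UNIV. f_scen A b C T W h Q p i (mu i) (lam i) w) \<le> ereal E" .
  have acc: "(\<lambda>i. u i - z) \<in> Acc" using zR by (simp add: R_iff u_def)
  have hz: "(\<Sum>i\<in>UNIV. hadamard (mu i) z) = z"
    using mu by (simp add: prob_tuples_def hadamard_def vec_eq_iff sum_distrib_right[symmetric])
  have hd: "hadamard a (c - d) = hadamard a c - hadamard a d" for a c d :: "real^'j"
    by (simp add: hadamard_def vec_eq_iff right_diff_distrib)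
  have "expect_mu mu (\<lambda>i. u i - z) = expect_mu mu u - (\<Sum>i\<in>UNIV. hadamard (mu i) z)"
    unfolding expect_mu_def by (simp only: hd sum_subtractf)
  then have "expect_mu mu (\<lambda>i. u i - z) = expect_mu mu u - z" by (simp only: hz)
  then have "ereal (E - w \<bullet> z) \<le> min_penalty R mu w"
    unfolding min_penalty_def E_def using acc by (intro SUP_upper2[OF acc]) (simp add: inner_diff_right)
  then have "(\<Sum>i\<in>UNIV. f_scen A b C T W h Q p i (mu i) (lam i) w) - min_penalty R mu w
      \<le> ereal E - ereal (E - w \<bullet> z)"
    by (rule ereal_minus_mono[OF 1])
  then show "(\<Sum>i\<in>UNIV. f_scen A b C T W h Q p i (mu i) (lam i) w) - min_penalty R mu w
      \<le> ereal (w \<bullet> z)" by simp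
qed
end

theorem theorem5p1:
  fixes p :: "'w::finite \<Rightarrow> real"
    and R :: "('w \<Rightarrow> real^'j) \<Rightarrow> (real^'j) set"
    and A :: "real^'m^'k" and b :: "real^'k" and C :: "real^'m^'j"
    and W :: "'w \<Rightarrow> real^'n^'l" and T :: "'w \<Rightarrow> real^'m^'l"
    and h :: "'w \<Rightarrow> real^'l" and Q :: "'w \<Rightarrow> real^'n^'j"
    and w :: "real^'j"
  assumes "CARD('w) \<ge> 2"
    and "\<forall>i. p i > 0" and "(\<Sum>i\<in>UNIV. p i) = 1"
    and "multivariate_convex_risk_measure R"
    and "feasible_X A b T W h \<noteq> {}" and "compact (feasible_X A b T W h)"
    and "\<forall>i. feasible_F A b T W h i \<noteq> {} \<and> compact (feasible_F A b T W h i)"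
    and "0 \<le> w" and "w \<noteq> 0"
  shows "P1 R A b C T W h Q w =
    (SUP (mu, lam) \<in> prob_tuples \<times> {lam::'w \<Rightarrow> real^'m. (\<Sum>i\<in>UNIV. p i *\<^sub>R lam i) = 0}.
       (\<Sum>i\<in>UNIV. f_scen A b C T W h Q p i (mu i) (lam i) w) - min_penalty R mu w)"
proof -
  interpret ts p R A b C W T h Q w
    using assms by unfold_locales auto
  show ?thesis
  proof (rule antisym)
    show "P1 R A b C T W h Q w \<le>
      (SUP (mu, lam) \<in> prob_tuples \<times> {lam::'w \<Rightarrow> real^'m. (\<Sum>i\<in>UNIV. p i *\<^sub>R lam i) = 0}.
       (\<Sum>i\<in>UNIV. f_scen A b C T W h Q p i (mu i) (lam i) w) - min_penalty R mu w)"
    proof (rule dense_le)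
      fix e assume e: "e < P1 R A b C T W h Q w"
      show "e \<le> (SUP (mu, lam) \<in> prob_tuples \<times> {lam::'w \<Rightarrow> real^'m. (\<Sum>i\<in>UNIV. p i *\<^sub>R lam i) = 0}.
         (\<Sum>i\<in>UNIV. f_scen A b C T W h Q p i (mu i) (lam i) w) - min_penalty R mu w)"
      proof (cases e)
        case (real c)
        then have cP: "ereal c < P1 R A b C T W h Q w" using e by simp
        obtain bb \<alpha> \<delta> \<gamma> where sp:
          "\<And>x y a z s. (x,y) \<in> Fp \<Longrightarrow> a \<in> Acc' \<Longrightarrow> w \<bullet> z \<le> s \<Longrightarrow>
             bb < \<alpha> \<bullet> (\<chi> i. uu x y i - a$i - z) + \<delta> \<bullet> dd x + \<gamma> * s"
          "\<gamma> * c < bb" "0 < \<gamma>" "\<And>i j. 0 \<le> \<alpha> $ i $ j" "\<And>j. (\<Sum>i\<in>UNIV. \<alpha> $ i $ j) = \<gamma> * w $ j"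
          by (rule separation[OF cP]) blast
        obtain mu lam where ml: "mu \<in> prob_tuples" "(\<Sum>i\<in>UNIV. p i *\<^sub>R lam i) = 0"
          "ereal c < (\<Sum>i\<in>UNIV. f_scen A b C T W h Q p i (mu i) (lam i) w) - min_penalty R mu w"
          using construct[OF sp] by blast
        show ?thesis unfolding real
          by (rule SUP_upper2[of "(mu, lam)"]) (use ml in auto)
      qed (use e in auto)
    qed
  next
    show "(SUP (mu, lam) \<in> prob_tuples \<times> {lam::'w \<Rightarrow> real^'m. (\<Sum>i\<in>UNIV. p i *\<^sub>R lam i) = 0}.
       (\<Sum>i\<in>UNIV. f_scen A b C T W h Q p i (mu i) (lam i) w) - min_penalty R mu w)
      \<le> P1 R A b C T W h Q w"
      by (rule SUP_least) (auto intro: weak)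
  qed
qed

end
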